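(* Let $I\subset\mathbb R$ be an open interval and $Q,P\colon I\to S^2_0(\mathbb R^4)$ smooth maps with $\det Q(t)<0$ for all $t$, satisfying \[Q'=P,\qquad \big((P^2)_0\big)'=-\frac{4\,(\operatorname{Adj}Q)_0}{\sqrt{-\det Q}},\qquad \operatorname{tr}(P^3)=12\sqrt{-\det Q}.\] Then $Q(t)$ lies in a fixed one-dimensional subspace of $S^2_0(\mathbb R^4)$ for all $t\in I$ if and only if there exist $g\in\mathrm{SO}(4)$ and $t_0\in\mathbb R\setminus I$ such that \[Q(t)=-\frac{(t-t_0)^3}{18\sqrt3}\,gDg^T,\qquad P(t)=-\frac{(t-t_0)^2}{6\sqrt3}\,gDg^T\qquad(t\in I),\] where $D=\operatorname{diag}(-3,1,1,1)$. (This solution corresponds to the $\mathrm{G}_2$ cone metric over $S^3\times S^3$ with its invariant nearly-Kähler structure.)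
   Context: $S^2_0(\mathbb R^4)$ is the space of real symmetric trace-free $4\times4$ matrices; $X_0=X-\frac14(\operatorname{tr}X)I$; $\operatorname{Adj}$ is the adjugate. In the paper, these equations are the matrix form of the $\mathrm{G}_2$ evolution equations $\partial_t\gamma=d\omega$, $\partial_t(\omega^2)=-2d\hat\gamma$ for left-invariant half-flat structures on $S^3\times S^3$ with $[\gamma]=0$, together with the volume normalisation; $P$ encodes $\omega$ and $Q$ a primitive of $\gamma$. *)

theory Defs
  imports "HOL-Analysis.Analysis"
begin

type_synonym mat4 = "real^4^4"

definition smooth_on :: "real set \<Rightarrow> (real \<Rightarrow> 'a::real_normed_vector) \<Rightarrow> bool" where
  "smooth_on I f \<longleftrightarrow> (\<exists>d :: nat \<Rightarrow> real \<Rightarrow> 'a. (\<forall>t\<in>I. d 0 t = f t) \<and>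
      (\<forall>n. \<forall>t\<in>I. (d n has_vector_derivative d (Suc n) t) (at t)))"

definition tracefree :: "mat4 \<Rightarrow> mat4" where
  "tracefree X = X - (trace X / 4) *\<^sub>R mat 1"

text \<open>Adjugate: Adj(A)_{ik} is the (k,i) cofactor, i.e. det of A with row k replaced by e_i.\<close>
definition adjugate :: "mat4 \<Rightarrow> mat4" where
  "adjugate A = (\<chi> i k. det (\<chi> r. if r = k then axis i 1 else A $ r))"

definition S20 :: "mat4 set" where
  "S20 = {X. transpose X = X \<and> trace X = 0}"

definition SO4 :: "mat4 set" where
  "SO4 = {g. orthogonal_matrix g \<and> det g = 1}"

definition Dmat :: mat4 where
  "Dmat = (\<chi> i j. if i = j then (if i = 0 then -3 else 1) else 0)"

end

theory Submission
  imports Defs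
begin


lemma sym_dot:
  fixes A :: "real^'n^'n"
  assumes "transpose A = A"
  shows "inner x (A *v y) = inner (A *v x) y"
  by (metis assms dot_lmul_matrix vector_transpose_matrix)

lemma quad_expand:
  fixes A :: "real^'n^'n"
  assumes "transpose A = A"
  shows "inner (u + e *\<^sub>R w) (A *v (u + e *\<^sub>R w)) =
     inner u (A *v u) + 2 * e * inner w (A *v u) + e^2 * inner w (A *v w)"
proof -
  have "inner u (A *v w) = inner w (A *v u)"
    using sym_dot[OF assms, of u w] by (simp add: inner_commute)
  then show ?thesis
    by (simp add: matrix_vector_right_distrib inner_add_left inner_add_right
        matrix_vector_mult_scaleR algebra_simps power2_eq_square)
qed

lemma sym_eigvec:
  fixes A :: "real^'n^'n"
  assumes sym: "transpose A = A" and S: "subspace S" and ne: "x0 \<in> S" "x0 \<noteq> 0"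
    and inv: "\<And>x. x \<in> S \<Longrightarrow> A *v x \<in> S"
  obtains u \<mu> where "u \<in> S" "norm u = 1" "A *v u = \<mu> *\<^sub>R u"
proof -
  let ?K = "S \<inter> sphere 0 1"
  let ?f = "\<lambda>u. inner u (A *v u)"
  have cK: "compact ?K"
    using S closed_subspace compact_sphere by (blast intro: closed_Int_compact)
  have "x0 /\<^sub>R norm x0 \<in> ?K"
    using ne S by (auto simp: subspace_scale)
  then have neK: "?K \<noteq> {}" by blast
  have cf: "continuous_on ?K ?f"
    by (intro continuous_intros continuous_on_compose2[OF matrix_vector_mult_linear_continuous_on]) 
      (auto intro: continuous_on_id)
  obtain u where uK: "u \<in> ?K" and umax: "\<And>y. y \<in> ?K \<Longrightarrow> ?f y \<le> ?f u"
    using continuous_attains_sup[OF cK neK cf] by blast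
  define l where "l = ?f u"
  have bound: "?f y \<le> l * inner y y" if "y \<in> S" for y
  proof (cases "y = 0")
    case True then show ?thesis by simp
  next
    case False
    have "y /\<^sub>R norm y \<in> ?K" using that False S by (auto simp: subspace_scale)
    then have "?f (y /\<^sub>R norm y) \<le> l" using umax l_def by blast
    moreover have "?f (y /\<^sub>R norm y) = ?f y / (norm y)^2"
      by (simp add: matrix_vector_mult_scaleR power2_eq_square field_simps)
    moreover have "(norm y)^2 = inner y y" by (simp add: power2_norm_eq_inner)
    moreover have "norm y > 0" using False by simp
    ultimately show ?thesis by (simp add: divide_le_eq mult.commute)
  qed
  have un: "inner u u = 1" using uK by (simp add: dot_square_norm)
  define w where "w = A *v u - l *\<^sub>R u"
  have wS: "w \<in> S" using uK inv S unfolding w_def by (auto intro: subspace_diff subspace_scale)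
  have wu: "inner w u = 0" unfolding w_def l_def using un by (simp add: inner_diff_left inner_diff_right inner_commute)
  have wAu: "inner w (A *v u) = inner w w"
  proof -
    have "A *v u = w + l *\<^sub>R u" unfolding w_def by simp
    then show ?thesis using wu by (simp add: inner_add_right)
  qed
  have key: "2 * e * inner w w \<le> e^2 * (l * inner w w - ?f w)" for e
  proof -
    have "u + e *\<^sub>R w \<in> S" using uK wS S by (auto intro: subspace_add subspace_scale)
    from bound[OF this] have "?f (u + e *\<^sub>R w) \<le> l * inner (u + e *\<^sub>R w) (u + e *\<^sub>R w)" .
    moreover have "inner (u + e *\<^sub>R w) (u + e *\<^sub>R w) = 1 + e^2 * inner w w"
      using un wu by (simp add: inner_add_left inner_add_right inner_commute power2_eq_square)
    moreover have "?f (u + e *\<^sub>R w) = l + 2 * e * inner w w + e^2 * ?f w"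
      using quad_expand[OF sym, of u e w] wAu l_def by simp
    ultimately have "l + 2 * e * inner w w + e^2 * ?f w \<le> l * (1 + e^2 * inner w w)" by simp
    then show ?thesis by (simp add: algebra_simps)
  qed
  have "inner w w = 0"
  proof (rule ccontr)
    assume "inner w w \<noteq> 0"
    then have p: "inner w w > 0" by (simp add: inner_gt_zero_iff)
    define C where "C = l * inner w w - ?f w"
    define e where "e = inner w w / (\<bar>C\<bar> + 1)"
    have e0: "e > 0" using p unfolding e_def by simp
    have "2 * e * inner w w \<le> e^2 * C" using key unfolding C_def .
    then have "2 * inner w w \<le> e * C" using e0 by (simp add: power2_eq_square mult.assoc)
    also have "\<dots> \<le> e * \<bar>C\<bar>" using e0 by (simp add: mult_left_mono)
    also have "\<dots> < inner w w"
      using p unfolding e_def by (simp add: divide_less_eq field_simps)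
    finally show False using p by simp
  qed
  then have "A *v u = l *\<^sub>R u" unfolding w_def by simp
  then show ?thesis using that uK by auto
qed



lemma sym_eig_step:
  fixes A :: "real^'n^'n"
  assumes sym: "transpose A = A" and fin: "finite B" and card: "card B < CARD('n)"
    and eig: "\<forall>b\<in>B. \<exists>\<beta>. A *v b = \<beta> *\<^sub>R b"
  obtains u \<mu> where "norm u = 1" "A *v u = \<mu> *\<^sub>R u" "\<forall>b\<in>B. inner b u = 0"
proof -
  let ?S = "{y. \<forall>x\<in>B. orthogonal x y}"
  have S: "subspace ?S" by (rule subspace_orthogonal_to_vectors)
  have "dim B \<le> card B" using dim_le_card[of B B] fin span_superset by auto
  then have "dim B < DIM(real^'n)" using card by simp
  then obtain x0 where x0: "x0 \<noteq> 0" "\<And>y. y \<in> span B \<Longrightarrow> orthogonal x0 y"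
    using orthogonal_to_subspace_exists by blast
  have x0S: "x0 \<in> ?S" using x0(2) span_base orthogonal_commute by blast
  have inv: "A *v y \<in> ?S" if "y \<in> ?S" for y
  proof -
    { fix b assume b: "b \<in> B"
      then obtain \<beta> where be: "A *v b = \<beta> *\<^sub>R b" using eig by blast
      have "inner b (A *v y) = inner (A *v b) y" by (rule sym_dot[OF sym])
      also have "\<dots> = \<beta> * inner b y" using be by simp
      also have "\<dots> = 0" using that b by (simp add: orthogonal_def)
      finally have "orthogonal b (A *v y)" by (simp add: orthogonal_def) }
    then show ?thesis by blast
  qed
  obtain u \<mu> where "u \<in> ?S" "norm u = 1" "A *v u = \<mu> *\<^sub>R u"
    using sym_eigvec[OF sym S x0S x0(1) inv] by blast
  then show ?thesis using that by (auto simp: orthogonal_def)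
qed

lemma sym_eig_set:
  fixes A :: "real^'n^'n"
  assumes sym: "transpose A = A"
  shows "k \<le> CARD('n) \<Longrightarrow> \<exists>B. finite B \<and> card B = k \<and> pairwise orthogonal B \<and>
            (\<forall>b\<in>B. norm b = 1 \<and> (\<exists>\<beta>. A *v b = \<beta> *\<^sub>R b))"
proof (induction k)
  case 0
  then show ?case by (rule_tac x="{}" in exI) auto
next
  case (Suc k)
  then obtain B where B: "finite B" "card B = k" "pairwise orthogonal B"
    "\<forall>b\<in>B. norm b = 1 \<and> (\<exists>\<beta>. A *v b = \<beta> *\<^sub>R b)" by auto
  obtain u \<mu> where u: "norm u = 1" "A *v u = \<mu> *\<^sub>R u" "\<forall>b\<in>B. inner b u = 0"
    using sym_eig_step[OF sym B(1)] B Suc.prems by (metis Suc_le_lessD)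
  have "u \<notin> B"
  proof
    assume "u \<in> B" then have "inner u u = 0" using u by blast
    then show False using u(1) by simp
  qed
  show ?case
  proof (rule exI[of _ "insert u B"], intro conjI)
    show "card (insert u B) = Suc k" using B \<open>u \<notin> B\<close> by simp
    show "pairwise orthogonal (insert u B)" using B(3) u(3)
      by (auto simp: pairwise_insert orthogonal_def inner_commute)
  qed (use B u in auto)
qed

lemma spectral:
  fixes A :: "real^'n^'n"
  assumes sym: "transpose A = A"
  obtains g \<mu> where "orthogonal_matrix g" "\<And>j. A *v column j g = \<mu> j *\<^sub>R column j g"
proof -
  obtain B where B: "finite B" "card B = CARD('n)" "pairwise orthogonal B"
      "\<forall>b\<in>B. norm b = 1 \<and> (\<exists>\<beta>. A *v b = \<beta> *\<^sub>R b)"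
    using sym_eig_set[OF sym, of "CARD('n)"] by auto
  obtain f where f: "bij_betw f (UNIV::'n set) B"
    by (metis B(1) B(2) finite_class.finite_UNIV finite_same_card_bij)
  have n1: "norm (f i) = 1" for i using bij_betwE[OF f] B(4) by blast
  have orth: "i \<noteq> j \<Longrightarrow> orthogonal (f i) (f j)" for i j
    using B(3) f by (auto simp: pairwise_def bij_betw_def inj_on_def)
  have col: "column j (\<chi> i j. f j $ i) = f j" for j by (simp add: column_def)
  have "\<forall>j. \<exists>\<beta>. A *v f j = \<beta> *\<^sub>R f j" using bij_betwE[OF f] B(4) by blast
  then obtain \<mu> where "\<And>j. A *v f j = \<mu> j *\<^sub>R f j" by metis
  moreover have "orthogonal_matrix (\<chi> i j. f j $ i)"
    by (simp add: orthogonal_matrix_orthonormal_columns col n1 orth)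
  ultimately show ?thesis using that[of "\<chi> i j. f j $ i" \<mu>] col by auto
qed



lemma adj_entry:
  fixes A :: "real^'n^'n"
  shows "(A ** (\<chi> i k. det (\<chi> r. if r = k then axis i 1 else A $ r))) $ r $ k
         = det (\<chi> s. if s = k then A $ r else A $ s)"
proof -
  have "(A ** (\<chi> i k. det (\<chi> r. if r = k then axis i 1 else A $ r))) $ r $ k
      = (\<Sum>i\<in>UNIV. A$r$i * det (\<chi> s. if s = k then axis i 1 else A $ s))"
    by (simp add: matrix_matrix_mult_def)
  also have "\<dots> = (\<Sum>i\<in>UNIV. det (\<chi> s. if s = k then (A$r$i) *s axis i 1 else A $ s))"
    by (simp add: det_row_mul)
  also have "\<dots> = det (\<chi> s. if s = k then (\<Sum>i\<in>UNIV. (A$r$i) *s axis i 1) else A $ s)"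
    by (rule det_linear_row_sum[symmetric]) simp
  also have "\<dots> = det (\<chi> s. if s = k then A $ r else A $ s)"
    by (simp only: basis_expansion)
  finally show ?thesis .
qed

lemma adj_mult: "A ** adjugate A = det A *\<^sub>R mat 1"
proof -
  have "(A ** adjugate A) $ r $ k = (det A *\<^sub>R (mat 1::mat4)) $ r $ k" for r k
  proof (cases "r = k")
    case True
    have "(\<chi> s. if s = k then A $ r else A $ s) = A" using True by (simp add: vec_eq_iff)
    then show ?thesis using True adj_entry[of A r k] by (simp add: adjugate_def mat_def)
  next
    case False
    have "det (\<chi> s. if s = k then A $ r else A $ s) = 0"
      by (rule det_identical_rows[of r k]) (use False in \<open>auto simp: row_def vec_eq_iff\<close>)
    then show ?thesis using False adj_entry[of A r k] by (simp add: adjugate_def mat_def)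
  qed
  then show ?thesis by (simp add: vec_eq_iff)
qed



lemma cubic_pair:
  fixes x y :: real
  assumes "g * x^3 + c * x = d" "g * y^3 + c * y = d" "x \<noteq> y"
  shows "g * (x^2 + x*y + y^2) + c = 0"
proof -
  have "(x - y) * (g * (x^2 + x*y + y^2) + c) = 0"
    using assms by (simp add: algebra_simps power2_eq_square power3_eq_cube)
  then show ?thesis using assms(3) by simp
qed

lemma cubic_triple:
  fixes x y z :: real
  assumes "g * x^3 + c * x = d" "g * y^3 + c * y = d" "g * z^3 + c * z = d"
    "x \<noteq> y" "x \<noteq> z" "y \<noteq> z" "g \<noteq> 0"
  shows "x + y + z = 0"
proof -
  have a: "g * (x^2 + x*y + y^2) + c = 0" using cubic_pair assms by blast
  have b: "g * (x^2 + x*z + z^2) + c = 0" using cubic_pair assms by blast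
  have "g * ((y - z) * (x + y + z)) = 0" using a b by (simp add: algebra_simps power2_eq_square)
  then show ?thesis using assms by simp
qed

lemma scalar4:
  fixes x1 x2 x3 x4 g c d :: real
  assumes s: "x1 + x2 + x3 + x4 = 0" and p: "x1 * x2 * x3 * x4 = d" and d: "d < 0"
    and c1: "g * x1^3 + c * x1 = d" and c2: "g * x2^3 + c * x2 = d"
    and c3: "g * x3^3 + c * x3 = d" and c4: "g * x4^3 + c * x4 = d"
  shows "(x2 = x1 \<and> x3 = x1) \<or> (x2 = x1 \<and> x4 = x1) \<or> (x3 = x1 \<and> x4 = x1) \<or> (x3 = x2 \<and> x4 = x2)"
proof -
  have nz: "x1 \<noteq> 0" "x2 \<noteq> 0" "x3 \<noteq> 0" "x4 \<noteq> 0" using p d by auto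
  have g: "g \<noteq> 0"
  proof
    assume "g = 0"
    then have "c * x1 = d" "c * x2 = d" "c * x3 = d" "c * x4 = d" using c1 c2 c3 c4 by auto
    then have "c * (x1 + x2 + x3 + x4) = 4 * d" by (simp add: algebra_simps)
    then show False using s d by simp
  qed
  have t123: "x1 \<noteq> x2 \<Longrightarrow> x1 \<noteq> x3 \<Longrightarrow> x2 \<noteq> x3 \<Longrightarrow> x1 + x2 + x3 = 0"
    using cubic_triple[OF c1 c2 c3 _ _ _ g] by blast
  have t124: "x1 \<noteq> x2 \<Longrightarrow> x1 \<noteq> x4 \<Longrightarrow> x2 \<noteq> x4 \<Longrightarrow> x1 + x2 + x4 = 0"
    using cubic_triple[OF c1 c2 c4 _ _ _ g] by blast
  have t134: "x1 \<noteq> x3 \<Longrightarrow> x1 \<noteq> x4 \<Longrightarrow> x3 \<noteq> x4 \<Longrightarrow> x1 + x3 + x4 = 0"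
    using cubic_triple[OF c1 c3 c4 _ _ _ g] by blast
  have t234: "x2 \<noteq> x3 \<Longrightarrow> x2 \<noteq> x4 \<Longrightarrow> x3 \<noteq> x4 \<Longrightarrow> x2 + x3 + x4 = 0"
    using cubic_triple[OF c2 c3 c4 _ _ _ g] by blast
  have sq: "y * y * (-y) * (-y) \<ge> 0" for y :: real by (metis mult.assoc mult_minus_right minus_minus zero_le_square zero_le_mult_iff)
  show ?thesis
  proof (rule ccontr)
    assume na: "\<not> ?thesis"
    show False
    proof (cases "x1 = x2")
      case True
      then have "x3 \<noteq> x1" "x4 \<noteq> x1" using na by auto
      show False
      proof (cases "x3 = x4")
        case True
        then have "x3 = - x1" using s \<open>x1 = x2\<close> by simp
        then have "d \<ge> 0" using p True \<open>x1 = x2\<close> sq[of x1] by simp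
        then show False using d by simp
      next
        case False
        then have "x1 + x3 + x4 = 0" using t134 \<open>x3 \<noteq> x1\<close> \<open>x4 \<noteq> x1\<close> by auto
        then show False using s \<open>x1 = x2\<close> nz by simp
      qed
    next
      case n12: False
      show False
      proof (cases "x1 = x3")
        case True
        then have "x2 \<noteq> x1" "x4 \<noteq> x1" using na n12 by auto
        show False
        proof (cases "x2 = x4")
          case True
          then have "x2 = - x1" using s \<open>x1 = x3\<close> by simp
          then have "d \<ge> 0" using p True \<open>x1 = x3\<close> sq[of x1] by (simp add: mult_ac)
          then show False using d by simp
        next
          case False
          then have "x1 + x2 + x4 = 0" using t124 \<open>x2 \<noteq> x1\<close> \<open>x4 \<noteq> x1\<close> by auto
          then show False using s \<open>x1 = x3\<close> nz by simp
        qed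
      next
        case n13: False
        show False
        proof (cases "x1 = x4")
          case True
          then have "x2 \<noteq> x1" "x3 \<noteq> x1" using na n12 n13 by auto
          show False
          proof (cases "x2 = x3")
            case True
            then have "x2 = - x1" using s \<open>x1 = x4\<close> by simp
            then have "d \<ge> 0" using p True \<open>x1 = x4\<close> sq[of x1] by (simp add: mult_ac)
            then show False using d by simp
          next
            case False
            then have "x1 + x2 + x3 = 0" using t123 \<open>x2 \<noteq> x1\<close> \<open>x3 \<noteq> x1\<close> by auto
            then show False using s \<open>x1 = x4\<close> nz by simp
          qed
        next
          case n14: False
          have "x1 + x2 + x3 = 0 \<or> x2 = x3" using t123 n12 n13 by blast
          moreover have "x1 + x2 + x4 = 0 \<or> x2 = x4" using t124 n12 n14 by blast
          moreover have "x1 + x3 + x4 = 0 \<or> x3 = x4" using t134 n13 n14 by blast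
          moreover have "\<not> (x2 = x3 \<and> x2 = x4)" using na by auto
          ultimately show False using s nz by auto
        qed
      qed
    qed
  qed
qed



lemma prod_4: "prod (f::4\<Rightarrow>real) UNIV = f 1 * f 2 * f 3 * f 4"
  unfolding UNIV_4 by (simp add: mult_ac)

definition outer :: "real^4 \<Rightarrow> mat4" where "outer v = (\<chi> i j. v$i * v$j)"

lemma outer_mv: "outer v *v x = inner v x *\<^sub>R v"
  by (simp add: outer_def matrix_vector_mult_def inner_vec_def vec_eq_iff sum_distrib_left mult_ac)

lemma tgXg: "(transpose g ** X ** g) $ i $ j = inner (column i g) (X *v column j g)"
  apply (simp add: matrix_matrix_mult_def matrix_vector_mult_def column_def transpose_def
      inner_vec_def sum_distrib_left sum_distrib_right)
  apply (subst sum.swap)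
  apply (simp add: mult_ac)
  done

lemma col_mult: "column j (X ** g) = X *v column j g"
  by (simp add: column_def matrix_matrix_mult_def matrix_vector_mult_def vec_eq_iff mult_ac)

lemma tracefree_mv: "tracefree X *v x = X *v x - (trace X / 4) *\<^sub>R x"
  by (simp add: tracefree_def algebra_simps scaleR_matrix_vector_assoc[symmetric])

lemma shape:
  fixes M :: mat4
  assumes sym: "transpose M = M" and tr: "trace M = 0" and dt: "det M < 0"
    and ad: "tracefree (adjugate M) = \<gamma> *\<^sub>R tracefree (M ** M)"
  obtains a v where "a \<noteq> 0" "norm v = 1" "M = a *\<^sub>R (mat 1 - 4 *\<^sub>R outer v)"
proof -
  obtain g \<mu> where og: "orthogonal_matrix g" and eig: "\<And>j. M *v column j g = \<mu> j *\<^sub>R column j g"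
    using spectral[OF sym] by blast
  define u where "u j = column j g" for j
  have eigu: "M *v u j = \<mu> j *\<^sub>R u j" for j using eig u_def by simp
  have on: "inner (u i) (u j) = (if i = j then 1 else 0)" for i j
    using og unfolding orthogonal_matrix_orthonormal_columns u_def
    by (auto simp: orthogonal_def norm_eq_1)
  have gg: "g ** transpose g = mat 1" "transpose g ** g = mat 1"
    using og by (auto simp: orthogonal_matrix_def)
  have Lam: "transpose g ** M ** g = (\<chi> i j. if i = j then \<mu> j else 0)"
    by (simp add: vec_eq_iff tgXg eig on[unfolded u_def])
  have "trace (transpose g ** M ** g) = trace M"
    by (metis gg(1) matrix_mul_assoc matrix_mul_rid trace_mul_sym)
  then have "sum \<mu> UNIV = 0" using Lam tr by (simp add: trace_def)
  then have s: "\<mu> 1 + \<mu> 2 + \<mu> 3 + \<mu> 4 = 0" by (simp add: sum_4)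
  have "det g * det g = 1" using gg(1) by (metis det_I det_mul det_transpose)
  then have "det (transpose g ** M ** g) = det M" by (simp add: det_mul)
  moreover have "det (transpose g ** M ** g) = prod \<mu> UNIV" unfolding Lam
    by (subst det_diagonal) simp_all
  ultimately have p: "\<mu> 1 * \<mu> 2 * \<mu> 3 * \<mu> 4 = det M" by (simp add: prod_4)
  define d where "d = det M"
  define \<tau> where "\<tau> = trace (adjugate M) / 4"
  define \<sigma> where "\<sigma> = trace (M ** M) / 4"
  have cub: "\<gamma> * (\<mu> j)^3 + (\<tau> - \<gamma> * \<sigma>) * \<mu> j = d" for j
  proof -
    define aj where "aj = inner (u j) (adjugate M *v u j)"
    have "inner (u j) (M *v (adjugate M *v u j)) = d"
      by (simp add: matrix_vector_mul_assoc adj_mult d_def scaleR_matrix_vector_assoc[symmetric] on)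
    moreover have "inner (u j) (M *v (adjugate M *v u j)) = \<mu> j * aj"
      by (simp add: sym_dot[OF sym] eigu aj_def)
    ultimately have e1: "\<mu> j * aj = d" by simp
    have "inner (u j) (tracefree (adjugate M) *v u j) = \<gamma> * inner (u j) (tracefree (M ** M) *v u j)"
      by (simp add: ad scaleR_matrix_vector_assoc[symmetric])
    then have "aj - \<tau> = \<gamma> * (inner (u j) ((M ** M) *v u j) - \<sigma>)"
      by (simp add: tracefree_mv inner_diff_right on aj_def \<tau>_def \<sigma>_def)
    moreover have "inner (u j) ((M ** M) *v u j) = (\<mu> j)^2"
      by (simp add: matrix_vector_mul_assoc[symmetric] eigu matrix_vector_mult_scaleR on power2_eq_square)
    ultimately have "aj - \<tau> = \<gamma> * ((\<mu> j)^2 - \<sigma>)" by simp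
    then have "(aj - \<tau>) * \<mu> j = \<gamma> * ((\<mu> j)^2 - \<sigma>) * \<mu> j" by simp
    then have "\<mu> j * aj - \<tau> * \<mu> j = \<gamma> * (\<mu> j)^3 - \<gamma> * \<sigma> * \<mu> j"
      by (simp add: algebra_simps power2_eq_square power3_eq_cube)
    then show ?thesis using e1 by (simp add: algebra_simps)
  qed
  have dn: "d < 0" using dt d_def by simp
  have three: "(\<mu> 2 = \<mu> 1 \<and> \<mu> 3 = \<mu> 1) \<or> (\<mu> 2 = \<mu> 1 \<and> \<mu> 4 = \<mu> 1) \<or>
      (\<mu> 3 = \<mu> 1 \<and> \<mu> 4 = \<mu> 1) \<or> (\<mu> 3 = \<mu> 2 \<and> \<mu> 4 = \<mu> 2)"
    by (rule scalar4[OF s p[folded d_def] dn cub cub cub cub])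
  have "\<exists>a k. a \<noteq> 0 \<and> \<mu> k = -3 * a \<and> (\<forall>j. j \<noteq> k \<longrightarrow> \<mu> j = a)"
  proof -
    have nz: "\<mu> 1 \<noteq> 0" "\<mu> 2 \<noteq> 0" using p dt by auto
    have pick: "\<exists>a k. a \<noteq> 0 \<and> \<mu> k = -3 * a \<and> (\<forall>j. j \<noteq> k \<longrightarrow> \<mu> j = a)"
      if "\<And>j. j \<noteq> k \<Longrightarrow> \<mu> j = b" "\<mu> k = -3 * b" "b \<noteq> 0" for k b
      using that by blast
    from three show ?thesis
    proof (elim disjE conjE)
      assume h: "\<mu> 2 = \<mu> 1" "\<mu> 3 = \<mu> 1"
      show ?thesis
      proof (rule pick[of 4 "\<mu> 1"])
        fix j :: 4 assume "j \<noteq> 4" then show "\<mu> j = \<mu> 1" using h exhaust_4[of j] by auto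
      qed (use h s nz in auto)
    next
      assume h: "\<mu> 2 = \<mu> 1" "\<mu> 4 = \<mu> 1"
      show ?thesis
      proof (rule pick[of 3 "\<mu> 1"])
        fix j :: 4 assume "j \<noteq> 3" then show "\<mu> j = \<mu> 1" using h exhaust_4[of j] by auto
      qed (use h s nz in auto)
    next
      assume h: "\<mu> 3 = \<mu> 1" "\<mu> 4 = \<mu> 1"
      show ?thesis
      proof (rule pick[of 2 "\<mu> 1"])
        fix j :: 4 assume "j \<noteq> 2" then show "\<mu> j = \<mu> 1" using h exhaust_4[of j] by auto
      qed (use h s nz in auto)
    next
      assume h: "\<mu> 3 = \<mu> 2" "\<mu> 4 = \<mu> 2"
      show ?thesis
      proof (rule pick[of 1 "\<mu> 2"])
        fix j :: 4 assume "j \<noteq> 1" then show "\<mu> j = \<mu> 2" using h exhaust_4[of j] by auto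
      qed (use h s nz in auto)
    qed
  qed
  then obtain a k where ak: "a \<noteq> 0" "\<mu> k = -3 * a" "\<And>j. j \<noteq> k \<Longrightarrow> \<mu> j = a" by blast
  define Y where "Y = a *\<^sub>R (mat 1 - 4 *\<^sub>R outer (u k))"
  have "column j (M ** g) = column j (Y ** g)" for j
  proof -
    have "Y *v u j = a *\<^sub>R (u j - (4 * inner (u k) (u j)) *\<^sub>R u k)"
      by (simp add: Y_def scaleR_matrix_vector_assoc[symmetric] algebra_simps outer_mv)
    also have "\<dots> = \<mu> j *\<^sub>R u j"
    proof (cases "j = k")
      case True
      have "a *\<^sub>R (u k - 4 *\<^sub>R u k) = (-3 * a) *\<^sub>R u k"
        by (simp add: scaleR_diff_right algebra_simps flip: scaleR_add_left)
      then show ?thesis using True ak on by simp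
    next
      case False
      then show ?thesis using ak on by simp
    qed
    finally show ?thesis by (simp add: col_mult u_def eig)
  qed
  then have "M ** g = Y ** g" by (simp add: column_def vec_eq_iff)
  then have "(M ** g) ** transpose g = (Y ** g) ** transpose g" by simp
  then have "M = Y" by (metis gg(1) matrix_mul_assoc matrix_mul_rid)
  moreover have "norm (u k) = 1" using on[of k k] by (simp add: norm_eq_1)
  ultimately show ?thesis using that[OF ak(1)] unfolding Y_def by blast
qed



lemma conj_outer:
  assumes "orthogonal_matrix g"
  shows "g ** (mat 1 - 4 *\<^sub>R outer e) ** transpose g = mat 1 - 4 *\<^sub>R outer (g *v e)"
proof -
  have gg: "g ** transpose g = mat 1" using assms by (simp add: orthogonal_matrix_def)
  have "(g ** (mat 1 - 4 *\<^sub>R outer e) ** transpose g) *v x = (mat 1 - 4 *\<^sub>R outer (g *v e)) *v x" for x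
  proof -
    have "(g ** (mat 1 - 4 *\<^sub>R outer e) ** transpose g) *v x = g *v ((mat 1 - 4 *\<^sub>R outer e) *v (transpose g *v x))"
      by (simp only: matrix_vector_mul_assoc matrix_mul_assoc)
    also have "\<dots> = g *v (transpose g *v x) - (4 * inner e (transpose g *v x)) *\<^sub>R (g *v e)"
      by (simp add: algebra_simps outer_mv scaleR_matrix_vector_assoc[symmetric])
    also have "inner e (transpose g *v x) = inner (g *v e) x"
      by (metis dot_lmul_matrix inner_commute transpose_transpose vector_transpose_matrix)
    also have "g *v (transpose g *v x) = x" by (simp only: matrix_vector_mul_assoc gg matrix_vector_mul_lid)
    finally show ?thesis
      by (simp add: algebra_simps outer_mv scaleR_matrix_vector_assoc[symmetric])
  qed
  then show ?thesis by (simp add: matrix_eq)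
qed

lemma Dmat_outer: "Dmat = mat 1 - 4 *\<^sub>R outer (axis 0 1)"
  by (simp add: Dmat_def outer_def mat_def axis_def vec_eq_iff)

lemma shape_SO4:
  fixes M :: mat4
  assumes sym: "transpose M = M" and tr: "trace M = 0" and dt: "det M < 0"
    and ad: "tracefree (adjugate M) = \<gamma> *\<^sub>R tracefree (M ** M)"
  obtains a g where "a \<noteq> 0" "g \<in> SO4" "M = a *\<^sub>R (g ** Dmat ** transpose g)"
proof -
  obtain a v where av: "a \<noteq> 0" "norm v = 1" "M = a *\<^sub>R (mat 1 - 4 *\<^sub>R outer v)"
    using shape[OF assms] by blast
  obtain g where g: "rotation_matrix g" "g *v axis 0 1 = v"
    using rotation_matrix_exists_basis[of v 0] av(2) by auto
  have "g \<in> SO4" using g(1) by (simp add: SO4_def rotation_matrix_def)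
  moreover have "g ** Dmat ** transpose g = mat 1 - 4 *\<^sub>R outer v"
    using conj_outer[of g "axis 0 1"] g by (simp add: Dmat_outer rotation_matrix_def)
  ultimately show ?thesis using that av by metis
qed

lemma diag_mult: "((\<chi> i j. if i = j then a i else 0) ** (\<chi> i j. if i = j then b i else 0) :: mat4)
   = (\<chi> i j. if i = j then a i * b i else 0)"
proof -
  have "(\<Sum>k\<in>UNIV. (if i = k then a i else 0) * (if k = j then b k else 0)) = (if i = j then a i * b i else 0)" for i j :: 4
  proof -
    have "(\<Sum>k\<in>UNIV. (if i = k then a i else 0) * (if k = j then b k else 0)) = (\<Sum>k\<in>UNIV. if k = i then a i * (if k = j then b k else 0) else 0)"
      by (rule sum.cong) auto
    also have "\<dots> = a i * (if i = j then b i else 0)" by simp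
    finally show ?thesis by simp
  qed
  then show ?thesis by (simp add: matrix_matrix_mult_def vec_eq_iff)
qed
lemma Dmat_diag: "Dmat = (\<chi> i j. if i = j then (if i = 0 then -3 else 1) else 0)"
  by (simp add: Dmat_def)

lemma Dmat_facts: "transpose Dmat = Dmat" "trace Dmat = 0" "det Dmat = -3"
   "trace (Dmat ** Dmat ** Dmat) = -24"
proof -
  show "transpose Dmat = Dmat" by (simp add: Dmat_def transpose_def vec_eq_iff)
  show "trace Dmat = 0" by (simp add: Dmat_def trace_def sum_4)
  show "det Dmat = -3" by (subst det_diagonal) (simp_all add: Dmat_def prod_4)
  show "trace (Dmat ** Dmat ** Dmat) = -24"
    unfolding Dmat_diag diag_mult by (simp add: trace_def sum_4)
qed


lemma comp_deriv:
  fixes f :: "real \<Rightarrow> mat4"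
  assumes "(f has_vector_derivative f') (at t)"
  shows "((\<lambda>s. f s $ i $ j / c) has_real_derivative (f' $ i $ j / c)) (at t)"
proof -
  have bl: "bounded_linear (\<lambda>X::mat4. X $ i $ j / c)"
    by (intro bounded_linear_compose[OF bounded_linear_divide] bounded_linear_compose[OF bounded_linear_vec_nth] bounded_linear_vec_nth)
  show ?thesis
    using bounded_linear.has_vector_derivative[OF bl assms]
    by (simp add: has_real_derivative_iff_has_vector_derivative)
qed

lemma trace_scale: "trace (c *\<^sub>R (A::mat4)) = c * trace A"
  by (simp add: trace_def sum_distrib_left)

lemma tracefree_scale: "tracefree (c *\<^sub>R X) = c *\<^sub>R tracefree X"
  by (simp add: tracefree_def trace_scale algebra_simps)

lemma det_scale: "det (c *\<^sub>R (A::mat4)) = c^4 * det A"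
proof -
  have "c *\<^sub>R A = (\<chi> i. c *s A $ i)" by (simp add: vec_eq_iff)
  then show ?thesis using det_rows_mul[of "\<lambda>_. c" "\<lambda>i. A $ i"] by (simp add: prod_4 power4_eq_xxxx)
qed

lemma S20_subspace: "subspace S20"
  unfolding subspace_def S20_def
  by (auto simp: transpose_def vec_eq_iff trace_def sum.distrib simp flip: sum_distrib_left)

lemma mult_scale: "(a *\<^sub>R X) ** (b *\<^sub>R (Y::mat4)) = (a * b) *\<^sub>R (X ** Y)"
  by (simp add: matrix_scalar_ac scalar_matrix_assoc mult.commute)



lemma ode:
  fixes \<phi> \<psi> :: "real \<Rightarrow> real"
  assumes op: "open I" and iv: "is_interval I"
    and der: "\<And>t. t \<in> I \<Longrightarrow> (\<phi> has_real_derivative \<psi> t) (at t)"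
    and nz: "\<And>t. t \<in> I \<Longrightarrow> \<phi> t \<noteq> 0"
    and eq: "\<And>t. t \<in> I \<Longrightarrow> (\<psi> t)^3 = - (sqrt 3 / 2) * (\<phi> t)^2"
  shows "\<exists>t0. t0 \<notin> I \<and> (\<forall>t\<in>I. \<phi> t = - ((t - t0)^3 / (18 * sqrt 3)) \<and>
                                  \<psi> t = - ((t - t0)^2 / (6 * sqrt 3)))"
proof -
  define k where "k = root 3 (sqrt 3 / 2)"
  have k3: "k^3 = sqrt 3 / 2" unfolding k_def by (simp add: odd_real_root_pow)
  have kpos: "k > 0" unfolding k_def by simp
  define \<rho> where "\<rho> t = root 3 (\<phi> t)" for t
  have r3: "(\<rho> t)^3 = \<phi> t" for t unfolding \<rho>_def by (simp add: odd_real_root_pow)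
  have rnz: "\<rho> t \<noteq> 0" if "t \<in> I" for t using nz[OF that] unfolding \<rho>_def by simp
  have psi: "\<psi> t = - k * (\<rho> t)^2" if "t \<in> I" for t
  proof -
    have "(- k * (\<rho> t)^2)^3 = - (k^3) * ((\<rho> t)^3)^2" by (simp add: power_mult_distrib power_mult[symmetric])
    also have "\<dots> = (\<psi> t)^3" using eq[OF that] k3 r3 by simp
    finally have "(- k * (\<rho> t)^2)^3 = (\<psi> t)^3" .
    then have "root 3 ((- k * (\<rho> t)^2)^3) = root 3 ((\<psi> t)^3)" by simp
    moreover have o: "odd (3::nat)" by simp
    ultimately show ?thesis by (metis odd_real_root_power_cancel[OF o])
  qed
  have dr: "(\<rho> has_real_derivative (- k / 3)) (at t)" if "t \<in> I" for t
  proof -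
    have d1: "DERIV (root 3) (\<phi> t) :> inverse (real 3 * root 3 (\<phi> t) ^ (3 - Suc 0))"
      by (rule DERIV_real_root_generic) (use nz[OF that] in auto)
    have "((\<lambda>s. root 3 (\<phi> s)) has_real_derivative
           inverse (real 3 * root 3 (\<phi> t) ^ (3 - Suc 0)) * \<psi> t) (at t)"
      by (rule DERIV_chain2[OF d1 der[OF that]])
    moreover have "inverse (real 3 * root 3 (\<phi> t) ^ (3 - Suc 0)) * \<psi> t = - k / 3"
      using psi[OF that] rnz[OF that] unfolding \<rho>_def[symmetric]
      by (simp add: field_simps power2_eq_square)
    ultimately show ?thesis unfolding \<rho>_def by simp
  qed
  define h where "h t = \<rho> t + k / 3 * t" for t
  have dh: "(h has_real_derivative 0) (at t within I)" if "t \<in> I" for t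
  proof -
    have "(h has_real_derivative (- k / 3 + k / 3)) (at t)"
    proof -
      have d2: "((\<lambda>s. k/3 * s) has_real_derivative k/3) (at t)" using DERIV_cmult_Id .
      show ?thesis unfolding h_def using DERIV_add[OF dr[OF that] d2] by simp
    qed
    then show ?thesis by (simp add: has_field_derivative_at_within)
  qed
  obtain c where c: "\<And>t. t \<in> I \<Longrightarrow> h t = c"
    using has_field_derivative_zero_constant[OF is_interval_convex[OF iv] dh] by blast
  define t0 where "t0 = 3 * c / k"
  have rho: "\<rho> t = - (k / 3) * (t - t0)" if "t \<in> I" for t
  proof -
    have e: "\<rho> t = c - k / 3 * t" using c[OF that] unfolding h_def by simp
    show ?thesis unfolding e t0_def using kpos by (simp add: field_simps)
  qed
  have s3: "sqrt 3 * sqrt 3 = (3::real)" by simp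
  have phi_f: "\<phi> t = - ((t - t0)^3 / (18 * sqrt 3))" if "t \<in> I" for t
  proof -
    have "\<phi> t = (- (k / 3) * (t - t0))^3" using r3[of t] rho[OF that] by simp
    also have "\<dots> = - (k^3 / 27) * (t - t0)^3" by (simp add: power_mult_distrib power_divide)
    also have "\<dots> = - ((t - t0)^3 / (18 * sqrt 3))" using s3 unfolding k3
      by (simp add: field_simps)
    finally show ?thesis .
  qed
  have psi_f: "\<psi> t = - ((t - t0)^2 / (6 * sqrt 3))" if "t \<in> I" for t
  proof -
    have "\<psi> t = - k * ((k / 3) * (t - t0))^2" using psi[OF that] rho[OF that] by (simp add: power2_eq_square)
    also have "\<dots> = - (k^3 / 9) * (t - t0)^2" by (simp add: power_mult_distrib power_divide power2_eq_square power3_eq_cube)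
    also have "\<dots> = - ((t - t0)^2 / (6 * sqrt 3))" using s3 unfolding k3
      by (simp add: field_simps)
    finally show ?thesis .
  qed
  have "t0 \<notin> I"
  proof
    assume "t0 \<in> I"
    then show False using phi_f[of t0] nz[of t0] by simp
  qed
  then show ?thesis using phi_f psi_f by blast
qed



lemma conj_mult:
  assumes "transpose g ** g = mat 1"
  shows "(g ** X ** transpose g) ** (g ** Y ** transpose g) = g ** (X ** Y) ** transpose g"
proof -
  have "(g ** X ** transpose g) ** (g ** Y ** transpose g) = g ** X ** (transpose g ** (g ** Y ** transpose g))"
    by (simp only: matrix_mul_assoc)
  also have "transpose g ** (g ** Y ** transpose g) = Y ** transpose g"
    by (simp only: matrix_mul_assoc assms matrix_mul_lid)
  finally show ?thesis by (simp only: matrix_mul_assoc)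
qed

lemma conj_trace:
  assumes "transpose g ** g = mat 1"
  shows "trace (g ** X ** transpose g) = trace (X::mat4)"
proof -
  have "trace ((g ** X) ** transpose g) = trace (transpose g ** (g ** X))" by (rule trace_mul_sym)
  also have "\<dots> = trace X" by (simp only: matrix_mul_assoc assms matrix_mul_lid)
  finally show ?thesis .
qed

lemma G_facts:
  assumes "g \<in> SO4"
  shows "det (g ** Dmat ** transpose g) = -3" "trace (g ** Dmat ** transpose g) = 0"
    "transpose (g ** Dmat ** transpose g) = g ** Dmat ** transpose g"
    "trace ((g ** Dmat ** transpose g) ** (g ** Dmat ** transpose g) ** (g ** Dmat ** transpose g)) = -24"
proof -
  have o: "orthogonal_matrix g" "det g = 1" using assms by (auto simp: SO4_def)
  have gg: "transpose g ** g = mat 1" using o by (simp add: orthogonal_matrix_def)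
  show "det (g ** Dmat ** transpose g) = -3" using o by (simp add: det_mul Dmat_facts)
  show "trace (g ** Dmat ** transpose g) = 0" using conj_trace[OF gg] by (simp add: Dmat_facts)
  show "transpose (g ** Dmat ** transpose g) = g ** Dmat ** transpose g"
    by (simp add: matrix_transpose_mul Dmat_facts matrix_mul_assoc)
  show "trace ((g ** Dmat ** transpose g) ** (g ** Dmat ** transpose g) ** (g ** Dmat ** transpose g)) = -24"
    by (simp only: conj_mult[OF gg] conj_trace[OF gg] Dmat_facts)
qed



theorem mainTheorem10:
  fixes I :: "real set" and Q P :: "real \<Rightarrow> mat4"
  assumes I_open: "open I" and I_int: "is_interval I" and I_ne: "I \<noteq> {}"
    and QS: "\<forall>t\<in>I. Q t \<in> S20" and PS: "\<forall>t\<in>I. P t \<in> S20"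
    and Qsm: "smooth_on I Q" and Psm: "smooth_on I P"
    and detQ: "\<forall>t\<in>I. det (Q t) < 0"
    and eq1: "\<forall>t\<in>I. (Q has_vector_derivative P t) (at t)"
    and eq2: "\<forall>t\<in>I. ((\<lambda>s. tracefree (P s ** P s)) has_vector_derivative
                 (- (4 / sqrt (- det (Q t)))) *\<^sub>R tracefree (adjugate (Q t))) (at t)"
    and eq3: "\<forall>t\<in>I. trace (P t ** P t ** P t) = 12 * sqrt (- det (Q t))"
  shows "(\<exists>V. subspace V \<and> V \<subseteq> S20 \<and> dim V = 1 \<and> (\<forall>t\<in>I. Q t \<in> V)) \<longleftrightarrow>
         (\<exists>g\<in>SO4. \<exists>t0. t0 \<notin> I \<and>
            (\<forall>t\<in>I. Q t = (- ((t - t0) ^ 3 / (18 * sqrt 3))) *\<^sub>R (g ** Dmat ** transpose g) \<and>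
                    P t = (- ((t - t0) ^ 2 / (6 * sqrt 3))) *\<^sub>R (g ** Dmat ** transpose g)))"
proof
  assume "\<exists>V. subspace V \<and> V \<subseteq> S20 \<and> dim V = 1 \<and> (\<forall>t\<in>I. Q t \<in> V)"
  then obtain V where V: "subspace V" "V \<subseteq> S20" "dim V = 1" "\<forall>t\<in>I. Q t \<in> V" by blast
  obtain B where B: "B \<subseteq> V" "independent B" "V \<subseteq> span B" "card B = dim V"
    using basis_exists by blast
  obtain A where BA: "B = {A}" using B(4) V(3) card_1_singletonE by metis
  have A0: "A \<noteq> 0" using B(2) BA by simp
  have "\<exists>c. Q t = c *\<^sub>R A" if "t \<in> I" for t
    using V(4) that B(3) BA by (auto simp: span_singleton)
  then obtain cc where cc: "\<And>t. t \<in> I \<Longrightarrow> Q t = cc t *\<^sub>R A" by metis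
  obtain i j where ij: "A $ i $ j \<noteq> 0" using A0 by (metis vec_eq_iff zero_index)
  define q where "q t = Q t $ i $ j / A $ i $ j" for t
  define p where "p t = P t $ i $ j / A $ i $ j" for t
  have QA: "Q t = q t *\<^sub>R A" if "t \<in> I" for t
    using cc[OF that] ij unfolding q_def by simp
  have dq: "(q has_real_derivative p t) (at t)" if "t \<in> I" for t
    unfolding q_def p_def using comp_deriv eq1 that by blast
  have PA: "P t = p t *\<^sub>R A" if "t \<in> I" for t
  proof -
    have "((\<lambda>s. q s *\<^sub>R A) has_vector_derivative p t *\<^sub>R A) (at t)"
      using has_vector_derivative_scaleR[OF dq[OF that] has_vector_derivative_const[of A]] by simp
    then have "(Q has_vector_derivative p t *\<^sub>R A) (at t)"
      by (rule has_vector_derivative_transform_within_open[OF _ I_open that]) (simp add: QA)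
    then show ?thesis using eq1 that vector_derivative_unique_at by blast
  qed
  obtain d where d: "\<forall>t\<in>I. d 0 t = P t" "\<forall>n. \<forall>t\<in>I. (d n has_vector_derivative d (Suc n) t) (at t)"
    using Psm unfolding smooth_on_def by blast
  have dP: "(P has_vector_derivative d 1 t) (at t)" if "t \<in> I" for t
    using has_vector_derivative_transform_within_open[OF _ I_open that, of "d 0" "d 1 t" P] d that by simp
  define p1 where "p1 t = d 1 t $ i $ j / A $ i $ j" for t
  have dp: "(p has_real_derivative p1 t) (at t)" if "t \<in> I" for t
    unfolding p_def p1_def using comp_deriv dP that by blast
  obtain t1 where t1: "t1 \<in> I" using I_ne by blast
  define M where "M = Q t1"
  define q1 where "q1 = q t1"
  have dM: "det M < 0" using detQ t1 M_def by simp
  have MA: "M = q1 *\<^sub>R A" using QA[OF t1] M_def q1_def by simp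
  have q1nz: "q1 \<noteq> 0"
  proof
    assume "q1 = 0"
    then have "det M = 0" using MA det_scale[of 0 A] by simp
    then show False using dM by simp
  qed
  define BB where "BB = tracefree (A ** A)"
  have TF: "tracefree (P s ** P s) = (p s)^2 *\<^sub>R BB" if "s \<in> I" for s
    using PA[OF that] by (simp add: mult_scale tracefree_scale BB_def power2_eq_square)
  have "((\<lambda>s. (p s)^2 *\<^sub>R BB) has_vector_derivative (2 * p t1 * p1 t1) *\<^sub>R BB) (at t1)"
  proof -
    have "((\<lambda>s. (p s)^2) has_real_derivative (of_nat 2 * (p1 t1 * (p t1)^(2 - Suc 0)))) (at t1)"
      by (rule DERIV_power[OF dp[OF t1]])
    then have "((\<lambda>s. (p s)^2) has_real_derivative (2 * p t1 * p1 t1)) (at t1)" by (simp add: mult_ac)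
    from has_vector_derivative_scaleR[OF this has_vector_derivative_const[of BB]] show ?thesis by simp
  qed
  then have "((\<lambda>s. tracefree (P s ** P s)) has_vector_derivative (2 * p t1 * p1 t1) *\<^sub>R BB) (at t1)"
    by (rule has_vector_derivative_transform_within_open[OF _ I_open t1]) (simp add: TF)
  then have e2: "(- (4 / sqrt (- det M))) *\<^sub>R tracefree (adjugate M) = (2 * p t1 * p1 t1) *\<^sub>R BB"
    using eq2 t1 vector_derivative_unique_at unfolding M_def by blast
  define sq where "sq = sqrt (- det M)"
  have sqp: "sq > 0" using dM sq_def by simp
  define \<beta> where "\<beta> = - (sq / 4) * (2 * p t1 * p1 t1)"
  have adB: "tracefree (adjugate M) = \<beta> *\<^sub>R BB"
  proof -
    have "(- (sq / 4)) *\<^sub>R ((- (4 / sq)) *\<^sub>R tracefree (adjugate M)) = (- (sq / 4)) *\<^sub>R ((2 * p t1 * p1 t1) *\<^sub>R BB)"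
      using e2 sq_def by simp
    then show ?thesis using sqp unfolding \<beta>_def by simp
  qed
  have BBM: "BB = inverse (q1^2) *\<^sub>R tracefree (M ** M)"
  proof -
    have "inverse q1 * inverse q1 * (q1 * q1) = 1" using q1nz by (simp add: field_simps)
    then show ?thesis by (simp add: MA mult_scale tracefree_scale BB_def power2_eq_square)
  qed
  have ad: "tracefree (adjugate M) = (\<beta> * inverse (q1^2)) *\<^sub>R tracefree (M ** M)"
    using adB BBM by simp
  have symM: "transpose M = M" "trace M = 0" using QS t1 M_def by (auto simp: S20_def)
  obtain a g where ag: "a \<noteq> 0" "g \<in> SO4" "M = a *\<^sub>R (g ** Dmat ** transpose g)"
    using shape_SO4[OF symM dM ad] by blast
  define G where "G = g ** Dmat ** transpose g"
  have AG: "A = (a / q1) *\<^sub>R G"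
  proof -
    have "q1 *\<^sub>R A = a *\<^sub>R G" using MA ag(3) G_def by simp
    then have "inverse q1 *\<^sub>R (q1 *\<^sub>R A) = inverse q1 *\<^sub>R (a *\<^sub>R G)" by simp
    then show ?thesis using q1nz by (simp add: field_simps)
  qed
  define \<phi> where "\<phi> t = q t * (a / q1)" for t
  define \<psi> where "\<psi> t = p t * (a / q1)" for t
  have QG: "Q t = \<phi> t *\<^sub>R G" if "t \<in> I" for t using QA[OF that] AG \<phi>_def by simp
  have PG: "P t = \<psi> t *\<^sub>R G" if "t \<in> I" for t using PA[OF that] AG \<psi>_def by simp
  have dphi: "(\<phi> has_real_derivative \<psi> t) (at t)" if "t \<in> I" for t
    unfolding \<phi>_def[abs_def] \<psi>_def by (rule DERIV_cmult_right[OF dq[OF that]])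
  have Gf: "det G = -3" "trace (G ** G ** G) = -24" using G_facts[OF ag(2)] G_def by auto
  have detQ': "det (Q t) = -3 * (\<phi> t)^4" if "t \<in> I" for t
    using QG[OF that] Gf by (simp add: det_scale)
  have trP: "trace (P t ** P t ** P t) = -24 * (\<psi> t)^3" if "t \<in> I" for t
    using PG[OF that] Gf by (simp add: mult_scale trace_scale power3_eq_cube)
  have nz: "\<phi> t \<noteq> 0" if "t \<in> I" for t
    using detQ that detQ'[OF that] by auto
  have cube: "(\<psi> t)^3 = - (sqrt 3 / 2) * (\<phi> t)^2" if "t \<in> I" for t
  proof -
    have "sqrt (- det (Q t)) = sqrt 3 * (\<phi> t)^2"
    proof -
      have "- det (Q t) = 3 * ((\<phi> t)^2)^2" using detQ'[OF that] by simp
      moreover have "sqrt (((\<phi> t)^2)^2) = (\<phi> t)^2" by (simp only: real_sqrt_abs abs_power2)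
      ultimately show ?thesis by (simp only: real_sqrt_mult)
    qed
    then have "-24 * (\<psi> t)^3 = 12 * (sqrt 3 * (\<phi> t)^2)" using eq3 that trP[OF that] by simp
    then show ?thesis by simp
  qed
  obtain t0 where t0: "t0 \<notin> I" "\<forall>t\<in>I. \<phi> t = - ((t - t0)^3 / (18 * sqrt 3)) \<and>
                                  \<psi> t = - ((t - t0)^2 / (6 * sqrt 3))"
    using ode[OF I_open I_int dphi nz cube] by blast
  show "\<exists>g\<in>SO4. \<exists>t0. t0 \<notin> I \<and>
            (\<forall>t\<in>I. Q t = (- ((t - t0) ^ 3 / (18 * sqrt 3))) *\<^sub>R (g ** Dmat ** transpose g) \<and>
                    P t = (- ((t - t0) ^ 2 / (6 * sqrt 3))) *\<^sub>R (g ** Dmat ** transpose g))"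
    using ag(2) t0 QG PG G_def by metis
next
  assume "\<exists>g\<in>SO4. \<exists>t0. t0 \<notin> I \<and>
            (\<forall>t\<in>I. Q t = (- ((t - t0) ^ 3 / (18 * sqrt 3))) *\<^sub>R (g ** Dmat ** transpose g) \<and>
                    P t = (- ((t - t0) ^ 2 / (6 * sqrt 3))) *\<^sub>R (g ** Dmat ** transpose g))"
  then obtain g t0 where g: "g \<in> SO4"
    and Qf: "\<forall>t\<in>I. Q t = (- ((t - t0) ^ 3 / (18 * sqrt 3))) *\<^sub>R (g ** Dmat ** transpose g)"
    by blast
  define G where "G = g ** Dmat ** transpose g"
  have Gf: "det G = -3" "trace G = 0" "transpose G = G" using G_facts[OF g] G_def by auto
  have GS: "G \<in> S20" using Gf by (simp add: S20_def)
  have G0: "G \<noteq> 0"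
  proof
    assume "G = 0"
    then have "det G = 0" using det_scale[of 0 G] by simp
    then show False using Gf by simp
  qed
  show "\<exists>V. subspace V \<and> V \<subseteq> S20 \<and> dim V = 1 \<and> (\<forall>t\<in>I. Q t \<in> V)"
  proof (intro exI conjI)
    show "subspace (span {G})" by simp
    show "span {G} \<subseteq> S20" using GS S20_subspace by (simp add: span_minimal)
    show "dim (span {G}) = 1" using G0 by (simp add: dim_eq_card_independent)
    show "\<forall>t\<in>I. Q t \<in> span {G}"
    proof
      fix t assume "t \<in> I"
      then have "Q t = (- ((t - t0) ^ 3 / (18 * sqrt 3))) *\<^sub>R G" using Qf G_def by simp
      moreover have "c *\<^sub>R G \<in> span {G}" for c by (simp add: span_base span_mul)
      ultimately show "Q t \<in> span {G}" by metis
    qed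
  qed
qed

end
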